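(* Let $u\in\mathcal{S}^F(B_1)$, let $\beta=\frac{2}{2-\gamma}$, and let $a_0>0$ be a constant depending only on $d,\Lambda,\gamma$ such that for every domain $\Omega$, every $v\in\mathcal{S}^F(\Omega)$, every $x_0\in\mathbb{R}^d$ and every $a\ge a_0$, one has $L_v(av-|x-x_0|^\beta)\ge0$ in $\{v>0\}\cap\Omega$. Suppose that for some direction $e\in\mathbb{S}^{d-1}$ and constants $\kappa>0$ and $0<\eta\le\frac{1}{2^{\beta+1}a_0}$ we have $$D_eu\ge\kappa\qquad\text{in }B_1\cap\{u\ge\eta\}.$$ Then there is $\varepsilon>0$, depending only on $\kappa$, such that if $D_eu\ge-\varepsilon$ in $B_1$, then $D_eu\ge0$ in $B_{1/2}$.
   Context: Fix $d\ge1$, $\Lambda\ge1$, $\gamma\in(1,2)$. $\mathcal{S}_d$ is the space of real symmetric $d\times d$ matrices. Standing assumptions on $F:\mathcal{S}_d\to\mathbb{R}$: (i) uniform ellipticity: $\frac1\Lambda\|P\|\le F(M+P)-F(M)\le\Lambda\|P\|$ for all $M,P\in\mathcal{S}_d$, $P\ge0$; (ii) $F$ is convex, $F(0)=0$, and the trace map is a sub-differential of $F$ at $0$; (iii) either $F$ is (Gâteaux) differentiable at $0$, or $F(\lambda M)=\lambda F(M)$ for all $\lambda>0$, $M\in\mathcal{S}_d$. A sub-differential of $F$ at $A$ is a linear map $S_A:\mathcal{S}_d\to\mathbb{R}$ with $S_A(M)\le F(A+M)-F(A)$ for all $M$. $\mathcal{S}^F(\Omega)$ is the class of continuous (viscosity,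 hence classical) solutions of $F(D^2u)=u^{\gamma-1}$, $u\ge0$ in $\Omega$. The linearized operator is $L_v(w)=S_{D^2v}(D^2w)-(\gamma-1)v^{\gamma-2}w$ in $\{v>0\}\cap\Omega$, with $S_{D^2v}$ a sub-differential of $F$ at $D^2v(x)$ at each point. Such a constant $a_0$ exists. $B_r$ denotes the ball of radius $r$ centered at the origin; $D_eu$ is the directional derivative in direction $e$. *)

theory Defs
  imports "HOL-Analysis.Analysis"
begin

definition sym_mat :: "real^'n^'n \<Rightarrow> bool" where
  "sym_mat M \<longleftrightarrow> transpose M = M"

definition psd :: "real^'n^'n \<Rightarrow> bool" where
  "psd P \<longleftrightarrow> (\<forall>x. 0 \<le> x \<bullet> (P *v x))"

definition mat_norm :: "real^'n^'n \<Rightarrow> real" where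
  "mat_norm P = onorm (\<lambda>x. P *v x)"

definition unif_elliptic :: "real \<Rightarrow> (real^'n^'n \<Rightarrow> real) \<Rightarrow> bool" where
  "unif_elliptic \<Lambda> F \<longleftrightarrow>
     (\<forall>M P. sym_mat M \<longrightarrow> sym_mat P \<longrightarrow> psd P \<longrightarrow>
        mat_norm P / \<Lambda> \<le> F (M + P) - F M \<and> F (M + P) - F M \<le> \<Lambda> * mat_norm P)"

definition subdiff :: "(real^'n^'n \<Rightarrow> real) \<Rightarrow> real^'n^'n \<Rightarrow> (real^'n^'n \<Rightarrow> real) \<Rightarrow> bool" where
  "subdiff F A S \<longleftrightarrow> linear S \<and> (\<forall>M. sym_mat M \<longrightarrow> S M \<le> F (A + M) - F A)"

definition gateaux_diff_at_0 :: "(real^'n^'n \<Rightarrow> real) \<Rightarrow> bool" where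
  "gateaux_diff_at_0 F \<longleftrightarrow>
     (\<exists>T. linear T \<and> (\<forall>M. sym_mat M \<longrightarrow> ((\<lambda>t. F (t *\<^sub>R M)) has_real_derivative T M) (at 0)))"

definition pos_homogeneous :: "(real^'n^'n \<Rightarrow> real) \<Rightarrow> bool" where
  "pos_homogeneous F \<longleftrightarrow> (\<forall>t M. t > 0 \<longrightarrow> sym_mat M \<longrightarrow> F (t *\<^sub>R M) = t * F M)"

definition standing :: "real \<Rightarrow> real \<Rightarrow> (real^'n^'n \<Rightarrow> real) \<Rightarrow> bool" where
  "standing \<Lambda> \<gamma> F \<longleftrightarrow> 1 \<le> \<Lambda> \<and> 1 < \<gamma> \<and> \<gamma> < 2 \<and>
     unif_elliptic \<Lambda> F \<and> convex_on {M. sym_mat M} F \<and> F 0 = 0 \<and> subdiff F 0 trace \<and>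
     (gateaux_diff_at_0 F \<or> pos_homogeneous F)"

definition hessian_at :: "(real^'n \<Rightarrow> real) \<Rightarrow> real^'n \<Rightarrow> real^'n^'n \<Rightarrow> bool" where
  "hessian_at w x H \<longleftrightarrow>
     (\<exists>g U. open U \<and> x \<in> U \<and> (\<forall>y\<in>U. (w has_derivative (\<lambda>h. g y \<bullet> h)) (at y)) \<and>
            (g has_derivative (\<lambda>h. H *v h)) (at x))"

definition C2_on :: "(real^'n) set \<Rightarrow> (real^'n \<Rightarrow> real) \<Rightarrow> bool" where
  "C2_on \<Omega> u \<longleftrightarrow> (\<exists>D2u. continuous_on \<Omega> D2u \<and> (\<forall>x\<in>\<Omega>. hessian_at u x (D2u x)))"

definition solF :: "(real^'n^'n \<Rightarrow> real) \<Rightarrow> real \<Rightarrow> (real^'n) set \<Rightarrow> (real^'n \<Rightarrow> real) \<Rightarrow> bool" where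
  "solF F \<gamma> \<Omega> u \<longleftrightarrow> continuous_on \<Omega> u \<and> C2_on \<Omega> u \<and>
     (\<forall>x\<in>\<Omega>. 0 \<le> u x \<and> (\<forall>H. hessian_at u x H \<longrightarrow> F H = u x powr (\<gamma> - 1)))"

text \<open>L_v(w) >= 0 in {v>0} \<inter> Omega, for every choice of sub-differential S_{D^2v(x)}.\<close>
definition lin_nonneg :: "(real^'n^'n \<Rightarrow> real) \<Rightarrow> real \<Rightarrow> (real^'n) set \<Rightarrow> (real^'n \<Rightarrow> real) \<Rightarrow> (real^'n \<Rightarrow> real) \<Rightarrow> bool" where
  "lin_nonneg F \<gamma> \<Omega> v w \<longleftrightarrow>
     (\<forall>x\<in>\<Omega>. 0 < v x \<longrightarrow> (\<forall>Hv Hw S. hessian_at v x Hv \<longrightarrow> hessian_at w x Hw \<longrightarrow> subdiff F Hv S \<longrightarrow>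
        0 \<le> S Hw - (\<gamma> - 1) * v x powr (\<gamma> - 2) * w x))"

definition dir_deriv :: "(real^'n \<Rightarrow> real) \<Rightarrow> real^'n \<Rightarrow> real^'n \<Rightarrow> real" where
  "dir_deriv u e x = frechet_derivative u (at x) e"

end

theory Submission
  imports Defs
begin


lemma subgrad_exists:
  fixes F :: "real^'n^'n \<Rightarrow> real"
  assumes cvx: "convex_on {M. sym_mat M} F" and symA: "sym_mat A"
  shows "\<exists>S. subdiff F A S"
proof -
  define symm :: "real^'n^'n \<Rightarrow> real^'n^'n" where "symm M = (1/2) *\<^sub>R (M + transpose M)" for M
  have tr_add: "transpose (X + Y) = transpose X + transpose (Y::real^'n^'n)" for X Y
    by (simp add: vec_eq_iff transpose_def)
  have sym_symm: "sym_mat (symm M)" for M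
    unfolding sym_mat_def symm_def by (simp add: transpose_scalar tr_add add.commute)
  have symm_id: "sym_mat M \<Longrightarrow> symm M = M" for M
    unfolding sym_mat_def symm_def by (simp add: scaleR_2[symmetric] del: scaleR_2)
  have symm_lin: "symm (u *\<^sub>R X + v *\<^sub>R Y) = u *\<^sub>R symm X + v *\<^sub>R symm Y" for u v X Y
    unfolding symm_def by (simp add: tr_add transpose_scalar algebra_simps)
  define G where "G M = F (symm M)" for M
  have cvxG: "G (u *\<^sub>R X + v *\<^sub>R Y) \<le> u * G X + v * G Y" if "u \<ge> 0" "v \<ge> 0" "u + v = 1" for u v X Y
    using cvx that sym_symm unfolding G_def convex_on_def symm_lin by blast
  define E :: "((real^'n^'n) \<times> real) set" where "E = {p. G (fst p) < snd p}"
  have convE: "convex E"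
    unfolding convex_def E_def
  proof (clarsimp)
    fix X :: "real^'n^'n" and s Y t and u v :: real
    assume h: "G X < s" "G Y < t" "0 \<le> u" "0 \<le> v" "u + v = 1"
    have "G (u *\<^sub>R X + v *\<^sub>R Y) \<le> u * G X + v * G Y" using cvxG h by blast
    also have "\<dots> < u * s + v * t"
    proof (cases "u = 0")
      case True then show ?thesis using h by simp
    next
      case False
      then have "u * G X < u * s" using h by simp
      moreover have "v * G Y \<le> v * t" using h by (simp add: mult_left_mono)
      ultimately show ?thesis by linarith
    qed
    finally show "G (u *\<^sub>R X + v *\<^sub>R Y) < u * s + v * t" .
  qed
  have GA: "G A = F A" using symm_id[OF symA] by (simp add: G_def)
  have "E \<noteq> {}" unfolding E_def by (rule ex_in_conv[THEN iffD1], rule exI[of _ "(0, G 0 + 1)"]) simp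
  moreover have "E \<inter> {(A, F A)} = {}" using GA by (auto simp: E_def)
  ultimately obtain p b where p: "p \<noteq> 0" "\<forall>x\<in>E. inner p x \<le> b" "\<forall>x\<in>{(A, F A)}. inner p x \<ge> b"
    using separating_hyperplane_sets[OF convE convex_singleton] by blast
  obtain a \<alpha> where pa: "p = (a, \<alpha>)" by (cases p)
  have key: "inner a M + \<alpha> * t \<le> inner a A + \<alpha> * F A" if "G M < t" for M t
  proof -
    have "(M, t) \<in> E" using that by (simp add: E_def)
    then have "inner p (M, t) \<le> b" using p by blast
    moreover have "b \<le> inner p (A, F A)" using p by blast
    ultimately show ?thesis by (simp add: pa)
  qed
  have "\<alpha> \<le> 0"
  proof -
    have "inner a A + \<alpha> * (F A + 1) \<le> inner a A + \<alpha> * F A" using key[of A "F A + 1"] GA by simp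
    then show ?thesis by (simp add: algebra_simps)
  qed
  moreover have "\<alpha> \<noteq> 0"
  proof
    assume a0: "\<alpha> = 0"
    have "inner a (A + a) \<le> inner a A" using key[of "A + a" "G (A + a) + 1"] a0 by simp
    then have "inner a a \<le> 0" by (simp add: inner_add_right)
    then have "a = 0" by (metis inner_eq_zero_iff inner_ge_zero order_antisym)
    with a0 pa p(1) show False by (simp add: zero_prod_def)
  qed
  ultimately have aneg: "\<alpha> < 0" by simp
  define S where "S M = inner a M / (- \<alpha>)" for M
  have "linear S" unfolding S_def
    by (rule linearI) (simp_all add: inner_add_right add_divide_distrib)
  moreover have "S M \<le> F (A + M) - F A" if "sym_mat M" for M
  proof -
    have symAM: "sym_mat (A + M)" using that symA unfolding sym_mat_def by (simp add: tr_add)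
    have GAM: "G (A + M) = F (A + M)" using symm_id[OF symAM] by (simp add: G_def)
    have "inner a M \<le> (- \<alpha>) * (F (A + M) - F A)"
    proof (rule field_le_epsilon)
      fix e :: real assume e: "e > 0"
      have "inner a (A + M) + \<alpha> * (G (A + M) + e / (- \<alpha>)) \<le> inner a A + \<alpha> * F A"
        using key[of "A + M" "G (A + M) + e / (- \<alpha>)"] e aneg divide_pos_neg[of e \<alpha>] by simp
      then show "inner a M \<le> (- \<alpha>) * (F (A + M) - F A) + e"
        using aneg GAM by (simp add: inner_add_right algebra_simps)
    qed
    then show ?thesis unfolding S_def using aneg
      by (subst pos_divide_le_eq) (auto simp: algebra_simps)
  qed
  ultimately show ?thesis unfolding subdiff_def by blast
qed


lemma dist_add_self: "dist x (x + d) = norm (d::'a::real_normed_vector)"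
  by (simp add: dist_norm)


lemma line_deriv:
  fixes f :: "'a::real_normed_vector \<Rightarrow> real"
  assumes "(f has_derivative L) (at (a + r *\<^sub>R v))"
  shows "((\<lambda>t. f (a + t *\<^sub>R v)) has_real_derivative L v) (at r)"
proof -
  have l: "((\<lambda>t. a + t *\<^sub>R v) has_derivative (\<lambda>t. t *\<^sub>R v)) (at r)"
    by (auto intro!: derivative_eq_intros)
  have "((f \<circ> (\<lambda>t. a + t *\<^sub>R v)) has_derivative (L \<circ> (\<lambda>t. t *\<^sub>R v))) (at r)"
    by (rule diff_chain_at[OF l]) (use assms in simp)
  moreover have "L \<circ> (\<lambda>t. t *\<^sub>R v) = (*) (L v)"
    using has_derivative_bounded_linear[OF assms]
    by (auto simp: fun_eq_iff linear_simps)
  ultimately show ?thesis by (simp add: has_field_derivative_def o_def)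
qed

lemma mixed:
  fixes u :: "'a::real_normed_vector \<Rightarrow> real" and DD :: "'a \<Rightarrow> 'a \<Rightarrow> 'a \<Rightarrow> real"
  assumes U: "cball x (s * (norm v + norm w)) \<subseteq> U" and s: "s > 0"
    and du: "\<forall>y\<in>U. (u has_derivative D y) (at y)"
    and dd: "\<forall>y\<in>U. \<forall>v. ((\<lambda>p. D p v) has_derivative (\<lambda>k. DD y k v)) (at y)"
  shows "\<exists>p. norm (p - x) \<le> s * (norm v + norm w) \<and>
     u (x + s *\<^sub>R w + s *\<^sub>R v) - u (x + s *\<^sub>R v) - u (x + s *\<^sub>R w) + u x = s * (s * DD p w v)"
proof -
  have inU: "x + r *\<^sub>R v + q *\<^sub>R w \<in> U" if "0 \<le> r" "r \<le> s" "0 \<le> q" "q \<le> s" for r q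
  proof -
    have "norm (r *\<^sub>R v + q *\<^sub>R w) \<le> r * norm v + q * norm w"
      using that by (metis abs_of_nonneg norm_scaleR norm_triangle_ineq)
    also have "\<dots> \<le> s * norm v + s * norm w" using that
      by (intro add_mono mult_right_mono) auto
    moreover have "dist x (x + r *\<^sub>R v + q *\<^sub>R w) = norm (r *\<^sub>R v + q *\<^sub>R w)"
      using dist_add_self[of x "r *\<^sub>R v + q *\<^sub>R w"] by (simp add: add.assoc)
    ultimately have "x + r *\<^sub>R v + q *\<^sub>R w \<in> cball x (s * (norm v + norm w))"
      by (simp add: algebra_simps)
    then show ?thesis using U by blast
  qed
  define a1 where "a1 = x + s *\<^sub>R w"
  define \<psi> where "\<psi> r = u (a1 + r *\<^sub>R v) - u (x + r *\<^sub>R v)" for r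
  have "\<exists>r1. 0 < r1 \<and> r1 < s \<and> \<psi> s - \<psi> 0 = (s - 0) * (D (a1 + r1 *\<^sub>R v) v - D (x + r1 *\<^sub>R v) v)"
  proof (rule MVT2[OF s])
    fix r assume r: "0 \<le> r" "r \<le> s"
    have p1: "a1 + r *\<^sub>R v \<in> U" using inU[of r s] r s unfolding a1_def by (simp add: algebra_simps)
    have p2: "x + r *\<^sub>R v \<in> U" using inU[of r 0] r s by simp
    show "(\<psi> has_real_derivative (D (a1 + r *\<^sub>R v) v - D (x + r *\<^sub>R v) v)) (at r)"
      unfolding \<psi>_def
      by (intro DERIV_diff line_deriv) (use du p1 p2 in auto)
  qed
  then obtain r1 where r1: "0 < r1" "r1 < s"
    "\<psi> s - \<psi> 0 = s * (D (a1 + r1 *\<^sub>R v) v - D (x + r1 *\<^sub>R v) v)" by auto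
  define a2 where "a2 = x + r1 *\<^sub>R v"
  have "\<exists>q1. 0 < q1 \<and> q1 < s \<and> D (a2 + s *\<^sub>R w) v - D (a2 + 0 *\<^sub>R w) v = (s - 0) * DD (a2 + q1 *\<^sub>R w) w v"
  proof (rule MVT2[OF s])
    fix q assume q: "0 \<le> q" "q \<le> s"
    have p: "a2 + q *\<^sub>R w \<in> U" using inU[of r1 q] r1 q unfolding a2_def by simp
    show "((\<lambda>t. D (a2 + t *\<^sub>R w) v) has_real_derivative DD (a2 + q *\<^sub>R w) w v) (at q)"
      by (rule line_deriv[of "\<lambda>p. D p v"]) (use dd p in auto)
  qed
  then obtain q1 where q1: "0 < q1" "q1 < s"
    "D (a2 + s *\<^sub>R w) v - D (a2 + 0 *\<^sub>R w) v = s * DD (a2 + q1 *\<^sub>R w) w v" by auto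
  have eq1: "a1 + r1 *\<^sub>R v = a2 + s *\<^sub>R w" unfolding a1_def a2_def by (simp add: algebra_simps)
  define p where "p = a2 + q1 *\<^sub>R w"
  have "p \<in> cball x (s * (norm v + norm w))"
  proof -
    have "norm (r1 *\<^sub>R v + q1 *\<^sub>R w) \<le> r1 * norm v + q1 * norm w"
      using r1 q1 by (metis abs_of_pos norm_scaleR norm_triangle_ineq)
    also have "\<dots> \<le> s * norm v + s * norm w" using r1 q1
      by (intro add_mono mult_right_mono) auto
    moreover have "dist x p = norm (r1 *\<^sub>R v + q1 *\<^sub>R w)"
      using dist_add_self[of x "r1 *\<^sub>R v + q1 *\<^sub>R w"] by (simp add: p_def a2_def add.assoc)
    ultimately show ?thesis by (simp add: algebra_simps)
  qed
  then have "norm (p - x) \<le> s * (norm v + norm w)" by (simp add: dist_norm norm_minus_commute)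
  moreover have "u (x + s *\<^sub>R w + s *\<^sub>R v) - u (x + s *\<^sub>R v) - u (x + s *\<^sub>R w) + u x = s * (s * DD p w v)"
    using r1(3) q1(3) eq1 unfolding \<psi>_def a1_def p_def a2_def by (simp add: algebra_simps)
  ultimately show ?thesis by blast
qed

lemma sym_from_inner:
  fixes M :: "real^'n^'n"
  assumes "\<And>v w. inner (M *v w) v = inner (M *v v) w"
  shows "sym_mat M"
proof -
  have "M $ i $ j = M $ j $ i" for i j
    using assms[of "axis i 1" "axis j 1"]
    by (simp add: matrix_vector_mult_basis inner_axis column_def)
  then show ?thesis unfolding sym_mat_def by (simp add: vec_eq_iff transpose_def)
qed

lemma cont_quad:
  fixes H :: "'a::topological_space \<Rightarrow> real^'n^'n"
  assumes "continuous_on U H"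
  shows "continuous_on U (\<lambda>p. inner (H p *v w) v)"
proof -
  have "linear (\<lambda>M::real^'n^'n. inner (M *v w) v)"
    by (rule linearI) (simp_all add: matrix_vector_mult_add_rdistrib inner_add_left
        scaleR_matrix_vector_assoc[symmetric])
  then have "bounded_linear (\<lambda>M::real^'n^'n. inner (M *v w) v)"
    by (simp add: linear_conv_bounded_linear)
  from continuous_on_compose[OF assms linear_continuous_on[OF this]] show ?thesis
    by (simp add: o_def)
qed

lemma hess_sym:
  fixes u :: "real^'n \<Rightarrow> real" and H :: "real^'n \<Rightarrow> real^'n^'n"
  assumes U: "open U" "x \<in> U"
    and du: "\<forall>y\<in>U. (u has_derivative D y) (at y)"
    and dd: "\<forall>y\<in>U. \<forall>v. ((\<lambda>p. D p v) has_derivative (\<lambda>k. inner (H y *v k) v)) (at y)"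
    and cont: "continuous_on U H"
  shows "sym_mat (H x)"
proof (rule sym_from_inner, rule ccontr)
  fix v w
  define Q1 where "Q1 p = inner (H p *v w) v" for p
  define Q2 where "Q2 p = inner (H p *v v) w" for p
  assume ne: "inner (H x *v w) v \<noteq> inner (H x *v v) w"
  define d where "d = \<bar>Q1 x - Q2 x\<bar>"
  have d: "d > 0" using ne by (simp add: d_def Q1_def Q2_def)
  have c1: "continuous_on U Q1" unfolding Q1_def by (rule cont_quad[OF cont])
  have c2: "continuous_on U Q2" unfolding Q2_def by (rule cont_quad[OF cont])
  obtain d1 where d1: "d1 > 0" "\<forall>p\<in>U. dist p x < d1 \<longrightarrow> dist (Q1 p) (Q1 x) < d/2"
    using c1[unfolded continuous_on_iff, rule_format, OF U(2), of "d/2"] d by auto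
  obtain d2 where d2: "d2 > 0" "\<forall>p\<in>U. dist p x < d2 \<longrightarrow> dist (Q2 p) (Q2 x) < d/2"
    using c2[unfolded continuous_on_iff, rule_format, OF U(2), of "d/2"] d by auto
  obtain r where r: "r > 0" "cball x r \<subseteq> U" using U open_contains_cball by blast
  define \<delta> where "\<delta> = min r (min d1 d2) / 2"
  have \<delta>: "\<delta> > 0" "\<delta> \<le> r" "\<delta> < d1" "\<delta> < d2" using r d1 d2 by (auto simp: \<delta>_def)
  define s where "s = \<delta> / (norm v + norm w + 1)"
  have s: "s > 0" using \<delta> by (simp add: s_def add_nonneg_pos)
  have sle: "s * (norm v + norm w) \<le> \<delta>"
  proof -
    have "s * (norm v + norm w) \<le> s * (norm v + norm w + 1)" using s by simp
    also have "\<dots> = \<delta>" unfolding s_def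
      using add_nonneg_pos[of "norm v + norm w" 1] by simp
    finally show ?thesis .
  qed
  have cb: "cball x (s * (norm v + norm w)) \<subseteq> U"
    using subset_cball[of "s * (norm v + norm w)" r x] r sle \<delta> by (meson order_trans)
  have dd1: "\<forall>y\<in>U. \<forall>v. ((\<lambda>p. D p v) has_derivative (\<lambda>k. (\<lambda>y k v. inner (H y *v k) v) y k v)) (at y)"
    using dd by simp
  obtain p1 where p1: "norm (p1 - x) \<le> s * (norm v + norm w)"
    "u (x + s *\<^sub>R w + s *\<^sub>R v) - u (x + s *\<^sub>R v) - u (x + s *\<^sub>R w) + u x = s * (s * inner (H p1 *v w) v)"
    using mixed[OF cb s du dd1] by auto
  have cb': "cball x (s * (norm w + norm v)) \<subseteq> U" using cb by (simp add: add.commute)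
  obtain p2 where p2: "norm (p2 - x) \<le> s * (norm w + norm v)"
    "u (x + s *\<^sub>R v + s *\<^sub>R w) - u (x + s *\<^sub>R w) - u (x + s *\<^sub>R v) + u x = s * (s * inner (H p2 *v v) w)"
    using mixed[OF cb' s du dd1] by auto
  have "x + s *\<^sub>R v + s *\<^sub>R w = x + s *\<^sub>R w + s *\<^sub>R v" by (simp add: algebra_simps)
  from p2(2)[unfolded this] p1(2) have "s * (s * Q1 p1) = s * (s * Q2 p2)"
    unfolding Q1_def Q2_def by linarith
  then have eq: "Q1 p1 = Q2 p2" using s by simp
  have dp1: "dist p1 x = norm (p1 - x)" by (simp add: dist_norm)
  have "dist x p1 \<le> s * (norm v + norm w)" using p1(1) dp1 by (simp add: dist_commute)
  then have "p1 \<in> U" using cb by auto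
  have "dist p1 x < d1" using p1(1) dp1 sle \<delta> by linarith
  with \<open>p1 \<in> U\<close> have e1: "dist (Q1 p1) (Q1 x) < d/2" using d1 by blast
  have dp2: "dist p2 x = norm (p2 - x)" by (simp add: dist_norm)
  have "dist x p2 \<le> s * (norm w + norm v)" using p2(1) dp2 by (simp add: dist_commute)
  then have "p2 \<in> U" using cb' by auto
  have "dist p2 x < d2" using p2(1) dp2 sle \<delta> by (simp add: add.commute)
  with \<open>p2 \<in> U\<close> have e2: "dist (Q2 p2) (Q2 x) < d/2" using d2 by blast
  have "d < d" using e1 e2 eq unfolding d_def dist_real_def by (simp add: abs_less_iff abs_if split: if_splits; linarith)
  then show False by simp
qed



definition outer :: "real^'n \<Rightarrow> real^'n^'n" where
  "outer d = (\<chi> i j. d $ i * d $ j)"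

lemma outer_mult: "outer d *v h = (d \<bullet> h) *\<^sub>R d"
  by (simp add: vec_eq_iff outer_def matrix_vector_mult_def inner_vec_def sum_distrib_left
      sum_distrib_right mult_ac)

lemma outer_sym: "sym_mat (outer d)"
  by (simp add: sym_mat_def outer_def transpose_def vec_eq_iff mult.commute)

lemma deriv_zero_bound:
  fixes f :: "'a::real_normed_vector \<Rightarrow> 'b::real_normed_vector"
  assumes a: "\<alpha> > 0" and C: "C > 0" and fy: "f y = 0"
    and bd: "\<And>x. norm (f x) \<le> C * norm (x - y) powr (1 + \<alpha>)"
  shows "(f has_derivative (\<lambda>h. 0)) (at y)"
  unfolding has_derivative_at'
proof (intro conjI allI impI bounded_linear_zero)
  fix e :: real assume e: "e > 0"
  define d where "d = (e / C) powr (1 / \<alpha>)"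
  have d: "d > 0" using e C by (simp add: d_def)
  have dpow: "d powr \<alpha> = e / C" using a e C by (simp add: d_def powr_powr)
  show "\<exists>d>0. \<forall>x'. 0 < norm (x' - y) \<and> norm (x' - y) < d \<longrightarrow> norm (f x' - f y - 0) / norm (x' - y) < e"
  proof (intro exI[of _ d] conjI allI impI d)
    fix x' assume x': "0 < norm (x' - y) \<and> norm (x' - y) < d"
    let ?r = "norm (x' - y)"
    have "norm (f x') \<le> C * (?r * ?r powr \<alpha>)" using bd[of x'] x' by (simp add: powr_add)
    moreover have "?r powr \<alpha> < e / C" using powr_less_mono2[OF a _ x'[THEN conjunct2]] dpow by simp
    ultimately have "norm (f x') < C * (?r * (e / C))" using x' C
      by (smt (verit) mult_strict_left_mono)
    then have "norm (f x') < ?r * e" using C by simp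
    then show "norm (f x' - f y - 0) / ?r < e" using x' fy by (simp add: divide_less_eq mult.commute)
  qed
qed

context
  fixes y :: "real^'n" and \<beta> :: real
  assumes b2: "\<beta> > 2"
begin

definition qq :: "real^'n \<Rightarrow> real" where "qq x = (x - y) \<bullet> (x - y)"
definition gb :: "real^'n \<Rightarrow> real^'n" where "gb x = (\<beta> * qq x powr (\<beta>/2 - 1)) *\<^sub>R (x - y)"
definition Hb :: "real^'n \<Rightarrow> real^'n^'n" where
  "Hb x = (\<beta> * qq x powr (\<beta>/2 - 1)) *\<^sub>R mat 1 + (\<beta> * (\<beta> - 2) * qq x powr (\<beta>/2 - 2)) *\<^sub>R outer (x - y)"

lemma qq_pow: "qq x powr a = norm (x - y) powr (2 * a)"
proof (cases "x = y")
  case True then show ?thesis by (simp add: qq_def)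
next
  case False
  then have "norm (x - y) > 0" by simp
  have "qq x = norm (x - y) powr 2"
    using powr_realpow[OF \<open>norm (x - y) > 0\<close>, of 2] by (simp add: qq_def power2_norm_eq_inner)
  then have "qq x powr a = (norm (x - y) powr 2) powr a" by simp
  also have "\<dots> = norm (x - y) powr (2 * a)" by (rule powr_powr)
  finally show ?thesis .
qed

lemma b_eq: "norm (x - y) powr \<beta> = qq x powr (\<beta>/2)"
  by (simp add: qq_pow)

lemma qq_deriv: "(qq has_derivative (\<lambda>h. 2 * ((x - y) \<bullet> h))) (at x)"
  unfolding qq_def
  by (auto intro!: derivative_eq_intros simp: inner_commute)

lemma Hb_sym: "sym_mat (Hb x)"
proof -
  have tr_add: "transpose (X + Y) = transpose X + transpose (Y::real^'n^'n)" for X Y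
    by (simp add: vec_eq_iff transpose_def)
  show ?thesis using outer_sym[of "x - y"]
    by (simp add: Hb_def sym_mat_def tr_add transpose_scalar)
qed

lemma Hb_mult: "Hb x *v h = (\<beta> * qq x powr (\<beta>/2 - 1)) *\<^sub>R h + (\<beta> * (\<beta> - 2) * qq x powr (\<beta>/2 - 2) * ((x - y) \<bullet> h)) *\<^sub>R (x - y)"
  by (simp add: Hb_def matrix_vector_mult_add_rdistrib scaleR_matrix_vector_assoc[symmetric] outer_mult)

lemma b_deriv: "((\<lambda>x. norm (x - y) powr \<beta>) has_derivative (\<lambda>h. gb x \<bullet> h)) (at x)"
proof (cases "x = y")
  case True
  have "((\<lambda>x. norm (x - y) powr \<beta>) has_derivative (\<lambda>h. 0)) (at y)"
  proof (rule deriv_zero_bound[of "\<beta> - 1" 1])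
    fix x show "norm (norm (x - y) powr \<beta>) \<le> 1 * norm (x - y) powr (1 + (\<beta> - 1))" by simp
  qed (use b2 in auto)
  moreover have "gb y = 0" by (simp add: gb_def)
  ultimately show ?thesis using True by simp
next
  case False
  then have q: "qq x > 0" by (simp add: qq_def)
  have "((\<lambda>x. qq x powr (\<beta>/2)) has_derivative
     (\<lambda>h. qq x powr (\<beta>/2) * ((\<lambda>h. 0) h * ln (qq x) + 2 * ((x - y) \<bullet> h) * (\<beta>/2) / qq x))) (at x)"
    by (rule has_derivative_powr[OF qq_deriv has_derivative_const q]) simp
  moreover have "(\<lambda>h. qq x powr (\<beta>/2) * ((\<lambda>h. 0) h * ln (qq x) + 2 * ((x - y) \<bullet> h) * (\<beta>/2) / qq x))
     = (\<lambda>h. gb x \<bullet> h)"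
  proof
    fix h
    have "qq x powr (\<beta>/2 - 1) = qq x powr (\<beta>/2) / qq x" using q by (simp add: powr_diff)
    moreover have "gb x \<bullet> h = \<beta> * qq x powr (\<beta>/2 - 1) * ((x - y) \<bullet> h)"
      by (simp only: gb_def inner_scaleR_left)
    ultimately show "qq x powr (\<beta>/2) * ((\<lambda>h. 0) h * ln (qq x) + 2 * ((x - y) \<bullet> h) * (\<beta>/2) / qq x) = gb x \<bullet> h"
      using q by (simp add: field_simps)
  qed
  ultimately show ?thesis by (simp add: b_eq)
qed

lemma gb_deriv: "(gb has_derivative (\<lambda>h. Hb x *v h)) (at x)"
proof (cases "x = y")
  case True
  have "(gb has_derivative (\<lambda>h. 0)) (at y)"
  proof (rule deriv_zero_bound[of "\<beta> - 2" \<beta>])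
    fix x
    have "norm (gb x) = \<bar>\<beta> * qq x powr (\<beta>/2 - 1)\<bar> * norm (x - y)"
      by (simp only: gb_def norm_scaleR)
    also have "\<dots> = \<beta> * norm (x - y) powr (\<beta> - 2) * norm (x - y)"
      using b2 by (simp add: qq_pow algebra_simps)
    also have "\<dots> = \<beta> * norm (x - y) powr (1 + (\<beta> - 2))"
    proof (cases "x = y")
      case False
      have "norm (x - y) powr (1 + (\<beta> - 2)) = norm (x - y) powr 1 * norm (x - y) powr (\<beta> - 2)"
        by (rule powr_add)
      then show ?thesis using False by simp
    qed simp
    finally show "norm (gb x) \<le> \<beta> * norm (x - y) powr (1 + (\<beta> - 2))" by simp
  qed (use b2 in \<open>auto simp: gb_def qq_def\<close>)
  moreover have "Hb y = 0" by (simp add: Hb_def qq_def)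
  ultimately show ?thesis using True by simp
next
  case False
  then have q: "qq x > 0" by (simp add: qq_def)
  define s where "s x = \<beta> * qq x powr (\<beta>/2 - 1)" for x
  have gbs: "gb = (\<lambda>x. s x *\<^sub>R (x - y))" by (simp add: fun_eq_iff gb_def s_def)
  have ds: "(s has_derivative (\<lambda>h. \<beta> * (qq x powr (\<beta>/2 - 1) * ((\<lambda>h. 0) h * ln (qq x) + 2 * ((x - y) \<bullet> h) * (\<beta>/2 - 1) / qq x)))) (at x)"
    unfolding s_def
    by (intro has_derivative_mult_right has_derivative_powr[OF qq_deriv has_derivative_const q]) simp
  have "(gb has_derivative (\<lambda>h. s x *\<^sub>R h + (\<beta> * (qq x powr (\<beta>/2 - 1) * ((\<lambda>h. 0) h * ln (qq x) + 2 * ((x - y) \<bullet> h) * (\<beta>/2 - 1) / qq x))) *\<^sub>R (x - y))) (at x)"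
    unfolding gbs
    by (rule has_derivative_scaleR[OF ds, THEN has_derivative_eq_rhs]) (auto intro!: derivative_eq_intros)
  moreover have "(\<lambda>h. s x *\<^sub>R h + (\<beta> * (qq x powr (\<beta>/2 - 1) * ((\<lambda>h. 0) h * ln (qq x) + 2 * ((x - y) \<bullet> h) * (\<beta>/2 - 1) / qq x))) *\<^sub>R (x - y))
      = (\<lambda>h. Hb x *v h)"
  proof
    fix h
    have "qq x powr (\<beta>/2 - 2) = qq x powr (\<beta>/2 - 1) / qq x" using q
      by (simp add: powr_diff[of "qq x" "\<beta>/2 - 1" 1, symmetric] powr_diff algebra_simps power2_eq_square)
    then have "\<beta> * (qq x powr (\<beta>/2 - 1) * ((\<lambda>h. 0) h * ln (qq x) + 2 * ((x - y) \<bullet> h) * (\<beta>/2 - 1) / qq x))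
       = \<beta> * (\<beta> - 2) * qq x powr (\<beta>/2 - 2) * ((x - y) \<bullet> h)"
      using q by (simp add: field_simps)
    then show "s x *\<^sub>R h + (\<beta> * (qq x powr (\<beta>/2 - 1) * ((\<lambda>h. 0) h * ln (qq x) + 2 * ((x - y) \<bullet> h) * (\<beta>/2 - 1) / qq x))) *\<^sub>R (x - y) = Hb x *v h"
      unfolding Hb_mult s_def by simp
  qed
  ultimately show ?thesis by simp
qed

end



lemma powr_concave:
  fixes s t p :: real
  assumes p: "0 < p" "p < 1" and t: "t > 0" and s: "s \<ge> 0"
  shows "s powr p \<le> t powr p + p * t powr (p - 1) * (s - t)"
proof (cases "s = 0")
  case True
  have "t powr p = t powr (p - 1) * t powr 1" using powr_add[of t "p - 1" 1] by simp
  moreover have "t powr 1 = t" using t by simp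
  ultimately have "t powr p = t powr (p - 1) * t" by metis
  moreover have "p * (t powr (p - 1) * t) \<le> t powr (p - 1) * t" using p t by simp
  ultimately show ?thesis using True by (simp add: algebra_simps)
next
  case False
  then have s0: "s > 0" using s by simp
  have der: "((\<lambda>z. z powr p) has_real_derivative p * z powr (p - 1)) (at z)" if "z > 0" for z
    using has_real_derivative_powr[OF that] .
  consider "s = t" | "t < s" | "s < t" by linarith
  then show ?thesis
  proof cases
    case 2
    obtain \<xi> where \<xi>: "t < \<xi>" "\<xi> < s" "s powr p - t powr p = (s - t) * (p * \<xi> powr (p - 1))"
      using MVT2[OF 2, of "\<lambda>z. z powr p" "\<lambda>z. p * z powr (p - 1)"] der t by force
    have "\<xi> powr (p - 1) \<le> t powr (p - 1)" using powr_mono2'[of "p - 1" t \<xi>] p t \<xi> by simp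
    then have "(s - t) * (p * \<xi> powr (p - 1)) \<le> (s - t) * (p * t powr (p - 1))"
      using 2 p by (intro mult_left_mono) auto
    then show ?thesis using \<xi> by (simp add: algebra_simps)
  next
    case 3
    obtain \<xi> where \<xi>: "s < \<xi>" "\<xi> < t" "t powr p - s powr p = (t - s) * (p * \<xi> powr (p - 1))"
      using MVT2[OF 3, of "\<lambda>z. z powr p" "\<lambda>z. p * z powr (p - 1)"] der s0 by force
    have "t powr (p - 1) \<le> \<xi> powr (p - 1)" using powr_mono2'[of "p - 1" \<xi> t] p s0 \<xi> by simp
    then have "(t - s) * (p * t powr (p - 1)) \<le> (t - s) * (p * \<xi> powr (p - 1))"
      using 3 p by (intro mult_left_mono) auto
    then show ?thesis using \<xi> by (simp add: algebra_simps)
  qed simp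
qed

lemma second_order:
  fixes W :: "'a::real_normed_vector \<Rightarrow> real"
  assumes V: "open V" "z \<in> V" and mn: "\<forall>p\<in>V. W z \<le> W p"
    and dW: "\<forall>p\<in>V. (W has_derivative DW p) (at p)"
    and dd: "((\<lambda>p. DW p v) has_derivative Q) (at z)"
  shows "Q v \<ge> 0"
proof (rule ccontr)
  assume neg: "\<not> Q v \<ge> 0"
  obtain d where d: "d > 0" "ball z d \<subseteq> V" using V open_contains_ball by blast
  define d' where "d' = d / (norm v + 1)"
  have d': "d' > 0" using d by (simp add: d'_def add_nonneg_pos)
  have inV: "z + t *\<^sub>R v \<in> V" if "\<bar>t\<bar> < d'" for t
  proof -
    have "\<bar>t\<bar> * norm v \<le> \<bar>t\<bar> * (norm v + 1)" by (simp add: mult_left_mono)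
    also have "\<dots> < d' * (norm v + 1)" using that by (simp add: add_nonneg_pos)
    also have "\<dots> = d" unfolding d'_def using add_nonneg_pos[of "norm v" 1] by simp
    finally have "dist z (z + t *\<^sub>R v) < d" using dist_add_self[of z "t *\<^sub>R v"] by simp
    then show ?thesis using d by auto
  qed
  define \<psi> where "\<psi> t = W (z + t *\<^sub>R v)" for t
  define \<psi>' where "\<psi>' t = DW (z + t *\<^sub>R v) v" for t
  have d1: "(\<psi> has_real_derivative \<psi>' t) (at t)" if "\<bar>t\<bar> < d'" for t
    unfolding \<psi>_def \<psi>'_def by (rule line_deriv) (use dW inV[OF that] in auto)
  have d2: "(\<psi>' has_real_derivative Q v) (at 0)"
    unfolding \<psi>'_def by (rule line_deriv[of "\<lambda>p. DW p v"]) (use dd in simp)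
  have "\<psi>' 0 = 0"
  proof (rule DERIV_local_min[OF d1[of 0] d'])
    show "\<forall>y. \<bar>0 - y\<bar> < d' \<longrightarrow> \<psi> 0 \<le> \<psi> y" using mn inV unfolding \<psi>_def by auto
  qed (use d' in auto)
  obtain d2' where d2': "d2' > 0" "\<forall>h>0. h < d2' \<longrightarrow> \<psi>' 0 > \<psi>' (0 + h)"
    using DERIV_neg_dec_right[OF d2] neg by auto
  define t where "t = min d' d2' / 2"
  have t: "0 < t" "t < d'" "t < d2'" using d' d2' by (auto simp: t_def)
  obtain \<xi> where \<xi>: "0 < \<xi>" "\<xi> < t" "\<psi> t - \<psi> 0 = (t - 0) * \<psi>' \<xi>"
    using MVT2[OF t(1), of \<psi> \<psi>'] d1 t by force
  have "\<psi>' \<xi> < 0" using d2'(2) \<xi> t \<open>\<psi>' 0 = 0\<close> by force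
  then have "t * \<psi>' \<xi> < 0" using t by (simp add: mult_pos_neg)
  then have "\<psi> t < \<psi> 0" using \<xi> by simp
  moreover have "\<psi> 0 \<le> \<psi> t" using mn inV[of t] t unfolding \<psi>_def by simp
  ultimately show False by simp
qed



lemma hess_facts:
  fixes u :: "real^'n \<Rightarrow> real"
  assumes hs: "\<forall>x\<in>B. hessian_at u x (H x)"
  shows "\<forall>x\<in>B. (u has_derivative frechet_derivative u (at x)) (at x)"
    and "\<forall>x\<in>B. \<forall>v. ((\<lambda>p. frechet_derivative u (at p) v) has_derivative (\<lambda>k. inner (H x *v k) v)) (at x)"
proof -
  show "\<forall>x\<in>B. (u has_derivative frechet_derivative u (at x)) (at x)"
  proof
    fix x assume "x \<in> B"
    then obtain g U where "open U" "x \<in> U" "\<forall>y\<in>U. (u has_derivative (\<lambda>h. g y \<bullet> h)) (at y)"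
      using hs unfolding hessian_at_def by blast
    then have "u differentiable (at x)" unfolding differentiable_def by blast
    then show "(u has_derivative frechet_derivative u (at x)) (at x)"
      by (simp add: frechet_derivative_works)
  qed
  show "\<forall>x\<in>B. \<forall>v. ((\<lambda>p. frechet_derivative u (at p) v) has_derivative (\<lambda>k. inner (H x *v k) v)) (at x)"
  proof (intro ballI allI)
    fix x v assume "x \<in> B"
    then obtain g U where gU: "open U" "x \<in> U" "\<forall>y\<in>U. (u has_derivative (\<lambda>h. g y \<bullet> h)) (at y)"
      "(g has_derivative (\<lambda>h. H x *v h)) (at x)"
      using hs unfolding hessian_at_def by blast
    have eq: "frechet_derivative u (at p) v = g p \<bullet> v" if "p \<in> U" for p
      using frechet_derivative_at[OF gU(3)[rule_format, OF that]] by simp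
    have "((\<lambda>p. g p \<bullet> v) has_derivative (\<lambda>k. (H x *v k) \<bullet> v)) (at x)"
      by (rule has_derivative_inner_left[OF gU(4)])
    then show "((\<lambda>p. frechet_derivative u (at p) v) has_derivative (\<lambda>k. inner (H x *v k) v)) (at x)"
      by (rule has_derivative_transform_within_open[OF _ gU(1) gU(2)]) (simp add: eq)
  qed
qed

lemma unif_approx:
  fixes u :: "real^'n \<Rightarrow> real"
  assumes K0: "compact K0" "K0 \<subseteq> B"
    and du: "\<forall>x\<in>B. (u has_derivative Du x) (at x)"
    and cont: "continuous_on K0 (\<lambda>x. Du x e)"
    and \<delta>: "\<delta> > 0" and r: "r > 0" and e: "norm e = 1"
    and inK: "\<forall>x\<in>C. \<forall>t. 0 \<le> t \<and> t \<le> r \<longrightarrow> x + t *\<^sub>R e \<in> K0"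
  shows "\<exists>h>0. h \<le> r \<and> (\<forall>x\<in>C. \<bar>(u (x + h *\<^sub>R e) - u x) / h - Du x e\<bar> < \<delta>)"
proof -
  have "uniformly_continuous_on K0 (\<lambda>x. Du x e)" by (rule compact_uniformly_continuous[OF cont K0(1)])
  then obtain \<rho> where \<rho>: "\<rho> > 0" "\<forall>x\<in>K0. \<forall>x'\<in>K0. dist x' x < \<rho> \<longrightarrow> dist (Du x' e) (Du x e) < \<delta>"
    unfolding uniformly_continuous_on_def using \<delta> by blast
  define h where "h = min r (\<rho>/2)"
  have h: "h > 0" "h \<le> r" "h < \<rho>" using r \<rho> by (auto simp: h_def)
  show ?thesis
  proof (intro exI[of _ h] conjI h ballI)
    fix x assume x: "x \<in> C"
    have "\<exists>\<xi>. 0 < \<xi> \<and> \<xi> < h \<and> u (x + h *\<^sub>R e) - u (x + 0 *\<^sub>R e) = (h - 0) * Du (x + \<xi> *\<^sub>R e) e"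
    proof (rule MVT2[OF h(1)])
      fix t assume t: "0 \<le> t" "t \<le> h"
      have "x + t *\<^sub>R e \<in> B" using inK x t h K0 by auto
      then show "((\<lambda>t. u (x + t *\<^sub>R e)) has_real_derivative Du (x + t *\<^sub>R e) e) (at t)"
        using du by (intro line_deriv) auto
    qed
    then obtain \<xi> where \<xi>: "0 < \<xi>" "\<xi> < h" "u (x + h *\<^sub>R e) - u x = h * Du (x + \<xi> *\<^sub>R e) e" by auto
    have in1: "x + \<xi> *\<^sub>R e \<in> K0" using inK x \<xi> h by auto
    have in0: "x \<in> K0" using inK[rule_format, OF x, of 0] r by simp
    have "dist (x + \<xi> *\<^sub>R e) x = \<xi>" using \<xi> e by (simp add: dist_norm)
    then have "dist (Du (x + \<xi> *\<^sub>R e) e) (Du x e) < \<delta>" using \<rho>(2) in1 in0 \<xi> h by auto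
    moreover have "(u (x + h *\<^sub>R e) - u x) / h = Du (x + \<xi> *\<^sub>R e) e" using \<xi> h by simp
    ultimately show "\<bar>(u (x + h *\<^sub>R e) - u x) / h - Du x e\<bar> < \<delta>" by (simp add: dist_real_def)
  qed
qed

lemma S_psd_nonneg:
  fixes F :: "real^'n^'n \<Rightarrow> real"
  assumes ell: "unif_elliptic \<Lambda> F" and L: "\<Lambda> > 0" and sd: "subdiff F A S"
    and symA: "sym_mat A" and symP: "sym_mat P" and psdP: "psd P"
  shows "S P \<ge> 0"
proof -
  have tr_add: "transpose (X + Y) = transpose X + transpose (Y::real^'n^'n)" for X Y
    by (simp add: vec_eq_iff transpose_def)
  have tr_neg: "transpose (- X) = - transpose (X::real^'n^'n)" for X
    by (simp add: vec_eq_iff transpose_def)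
  have tr_diff: "transpose (X - Y) = transpose X - transpose (Y::real^'n^'n)" for X Y
    by (simp add: vec_eq_iff transpose_def)
  have symmP: "sym_mat (- P)" using symP by (simp add: sym_mat_def tr_neg)
  have symAP: "sym_mat (A - P)" using symA symP by (simp add: sym_mat_def tr_diff)
  have bl: "bounded_linear S" using sd by (simp add: subdiff_def linear_conv_bounded_linear)
  have "S (- P) \<le> F (A + - P) - F A" using sd symmP unfolding subdiff_def by blast
  then have s1: "F A - F (A - P) \<le> S P" using linear_simps(4)[OF bl] by simp
  have "mat_norm P / \<Lambda> \<le> F (A - P + P) - F (A - P)"
    using ell symAP symP psdP unfolding unif_elliptic_def by blast
  moreover have "mat_norm P \<ge> 0" unfolding mat_norm_def
    by (rule onorm_pos_le) (simp add: linear_conv_bounded_linear[symmetric])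
  moreover have "0 \<le> mat_norm P / \<Lambda>" using L \<open>mat_norm P \<ge> 0\<close> by simp
  ultimately have "0 \<le> F A - F (A - P)" by simp
  then show ?thesis using s1 by linarith
qed



lemma shift_deriv:
  assumes "(f has_derivative f') (at (p + a))"
  shows "((\<lambda>x. f (x + a)) has_derivative f') (at p)"
proof -
  have l: "((\<lambda>x. x + a) has_derivative (\<lambda>k. k)) (at p)" by (auto intro!: derivative_eq_intros)
  have "((f \<circ> (\<lambda>x. x + a)) has_derivative (f' \<circ> (\<lambda>k. k))) (at p)"
    by (rule diff_chain_at[OF l]) (use assms in simp)
  then show ?thesis by (simp add: o_def)
qed

lemma hess_phi:
  fixes u :: "real^'n \<Rightarrow> real"
  assumes h: "hessian_at u z A" and b2: "\<beta> > 2"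
  shows "hessian_at (\<lambda>x. a * u x - norm (x - y) powr \<beta>) z (a *\<^sub>R A - Hb y \<beta> z)"
proof -
  obtain g U where gU: "open U" "z \<in> U" "\<forall>p\<in>U. (u has_derivative (\<lambda>h. g p \<bullet> h)) (at p)"
      "(g has_derivative (\<lambda>h. A *v h)) (at z)"
    using h unfolding hessian_at_def by blast
  define g' where "g' p = a *\<^sub>R g p - gb y \<beta> p" for p
  have "\<forall>p\<in>U. ((\<lambda>x. a * u x - norm (x - y) powr \<beta>) has_derivative (\<lambda>h. g' p \<bullet> h)) (at p)"
  proof
    fix p assume p: "p \<in> U"
    show "((\<lambda>x. a * u x - norm (x - y) powr \<beta>) has_derivative (\<lambda>h. g' p \<bullet> h)) (at p)"
      by (rule has_derivative_eq_rhs[OF has_derivative_diff[OF has_derivative_mult_right[OF gU(3)[rule_format, OF p]] b_deriv[OF b2]]])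
        (simp add: fun_eq_iff g'_def inner_diff_left)
  qed
  moreover have "(g' has_derivative (\<lambda>h. (a *\<^sub>R A - Hb y \<beta> z) *v h)) (at z)"
    unfolding g'_def
    by (rule has_derivative_eq_rhs[OF has_derivative_diff[OF has_derivative_scaleR_right[OF gU(4)] gb_deriv[OF b2]]])
      (simp add: fun_eq_iff matrix_vector_mult_diff_rdistrib scaleR_matrix_vector_assoc)
  ultimately show ?thesis unfolding hessian_at_def using gU(1,2) by blast
qed



theorem lemma2p11:
  fixes \<kappa> :: real
  assumes "\<kappa> > 0"
  shows "\<exists>\<epsilon>>0. \<forall>(\<Lambda>::real) (\<gamma>::real) (F::real^'n^'n \<Rightarrow> real) (a0::real) (u::real^'n \<Rightarrow> real) (e::real^'n) (\<eta>::real).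
     standing \<Lambda> \<gamma> F \<longrightarrow>
     solF F \<gamma> (ball 0 1) u \<longrightarrow>
     0 < a0 \<longrightarrow>
     (\<forall>\<Omega> v x0 a. open \<Omega> \<longrightarrow> connected \<Omega> \<longrightarrow> solF F \<gamma> \<Omega> v \<longrightarrow> a0 \<le> a \<longrightarrow>
        lin_nonneg F \<gamma> \<Omega> v (\<lambda>x. a * v x - norm (x - x0) powr (2 / (2 - \<gamma>)))) \<longrightarrow>
     norm e = 1 \<longrightarrow>
     0 < \<eta> \<longrightarrow> \<eta> \<le> 1 / (2 powr (2 / (2 - \<gamma>) + 1) * a0) \<longrightarrow>
     (\<forall>x\<in>ball 0 1. \<eta> \<le> u x \<longrightarrow> \<kappa> \<le> dir_deriv u e x) \<longrightarrow>
     (\<forall>x\<in>ball 0 1. - \<epsilon> \<le> dir_deriv u e x) \<longrightarrow>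
     (\<forall>x\<in>ball 0 (1/2). 0 \<le> dir_deriv u e x)"
proof -
  define \<epsilon> where "\<epsilon> = \<kappa> / 3"
  have \<epsilon>: "\<epsilon> > 0" using assms by (simp add: \<epsilon>_def)
  show ?thesis
  proof (rule exI[of _ \<epsilon>], intro conjI allI impI ballI \<epsilon>)
    fix \<Lambda> \<gamma> :: real and F :: "real^'n^'n \<Rightarrow> real" and a0 :: real and u :: "real^'n \<Rightarrow> real"
      and e :: "real^'n" and \<eta> :: real and y :: "real^'n"
    assume stand: "standing \<Lambda> \<gamma> F" and sol: "solF F \<gamma> (ball 0 1) u" and a0: "0 < a0"
      and LN: "\<forall>\<Omega> v x0 a. open \<Omega> \<longrightarrow> connected \<Omega> \<longrightarrow> solF F \<gamma> \<Omega> v \<longrightarrow> a0 \<le> a \<longrightarrow>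
        lin_nonneg F \<gamma> \<Omega> v (\<lambda>x. a * v x - norm (x - x0) powr (2 / (2 - \<gamma>)))"
      and ne: "norm e = 1" and eta: "0 < \<eta>" and etale: "\<eta> \<le> 1 / (2 powr (2 / (2 - \<gamma>) + 1) * a0)"
      and hk: "\<forall>x\<in>ball 0 1. \<eta> \<le> u x \<longrightarrow> \<kappa> \<le> dir_deriv u e x"
      and heps: "\<forall>x\<in>ball 0 1. - \<epsilon> \<le> dir_deriv u e x"
      and y: "y \<in> ball 0 (1/2)"
    define B :: "(real^'n) set" where "B = ball 0 1"
    have L1: "1 \<le> \<Lambda>" and g1: "1 < \<gamma>" and g2: "\<gamma> < 2" and ell: "unif_elliptic \<Lambda> F"
      and cvx: "convex_on {M. sym_mat M} F"
      using stand unfolding standing_def by auto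
    define \<beta> where "\<beta> = 2 / (2 - \<gamma>)"
    have b2: "\<beta> > 2" using g1 g2 by (simp add: \<beta>_def field_simps)
    have ucont: "continuous_on B u" and unn: "\<forall>x\<in>B. 0 \<le> u x"
      and eqF: "\<forall>x\<in>B. \<forall>H. hessian_at u x H \<longrightarrow> F H = u x powr (\<gamma> - 1)"
      using sol unfolding solF_def B_def by auto
    obtain D2u where D2cont: "continuous_on B D2u" and hess: "\<forall>x\<in>B. hessian_at u x (D2u x)"
      using sol unfolding solF_def C2_on_def B_def by auto
    define Du where "Du x = frechet_derivative u (at x)" for x
    have du: "\<forall>x\<in>B. (u has_derivative Du x) (at x)"
      using hess_facts(1)[OF hess] unfolding Du_def by blast
    have dd: "\<forall>x\<in>B. \<forall>v. ((\<lambda>p. Du p v) has_derivative (\<lambda>k. inner (D2u x *v k) v)) (at x)"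
      using hess_facts(2)[OF hess] unfolding Du_def by blast
    have symD: "sym_mat (D2u x)" if "x \<in> B" for x
      by (rule hess_sym[OF _ that du dd D2cont]) (simp add: B_def)
    have dir: "dir_deriv u e x = Du x e" for x by (simp add: dir_deriv_def Du_def)
    have Ddcont: "continuous_on B (\<lambda>x. Du x e)"
      by (rule continuous_at_imp_continuous_on)
        (use dd has_derivative_continuous in blast)
    show "0 \<le> dir_deriv u e y"
    proof (rule ccontr)
      assume "\<not> 0 \<le> dir_deriv u e y"
      then have neg: "Du y e < 0" by (simp add: dir)
      have ny: "norm y < 1/2" using y by simp
      have yB: "y \<in> B" using ny by (simp add: B_def)
      have uy: "u y < \<eta>"
      proof (rule ccontr)
        assume "\<not> u y < \<eta>"
        then have "\<kappa> \<le> Du y e" using hk yB by (simp add: B_def dir)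
        then show False using neg assms by simp
      qed
      define \<delta> where "\<delta> = min \<epsilon> (- Du y e / 2)"
      have \<delta>: "\<delta> > 0" "\<delta> \<le> \<epsilon>" "\<delta> \<le> - Du y e / 2" using \<epsilon> neg by (auto simp: \<delta>_def)
      define r0 where "r0 = norm y + 1/2"
      define r1 where "r1 = (r0 + 1) / 2"
      have r01: "r0 < r1" "r1 < 1" using ny by (auto simp: r0_def r1_def)
      have K0B: "cball 0 r1 \<subseteq> B" using r01 by (auto simp: B_def)
      have inK: "\<forall>x\<in>cball y (1/2). \<forall>t. 0 \<le> t \<and> t \<le> r1 - r0 \<longrightarrow> x + t *\<^sub>R e \<in> cball 0 r1"
      proof (intro ballI allI impI)
        fix x t assume x: "x \<in> cball y (1/2)" and t: "0 \<le> t \<and> t \<le> r1 - r0"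
        have "norm x \<le> norm y + dist y x" by (metis dist_norm norm_triangle_sub add.commute norm_minus_commute)
        also have "\<dots> \<le> r0" using x by (simp add: r0_def)
        finally have "norm (x + t *\<^sub>R e) \<le> r0 + t" using t ne norm_triangle_ineq[of x "t *\<^sub>R e"] by simp
        then show "x + t *\<^sub>R e \<in> cball 0 r1" using t by simp
      qed
      obtain h where h: "h > 0" "h \<le> r1 - r0"
        and approx: "\<forall>x\<in>cball y (1/2). \<bar>(u (x + h *\<^sub>R e) - u x) / h - Du x e\<bar> < \<delta>"
        using unif_approx[OF compact_cball K0B du continuous_on_subset[OF Ddcont K0B] \<delta>(1) _ ne inK] r01
        by auto
      have inB: "x + h *\<^sub>R e \<in> B" "x \<in> B" if "x \<in> cball y (1/2)" for x
      proof -
        have "x + h *\<^sub>R e \<in> cball 0 r1" using inK that h by simp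
        moreover have "x + 0 *\<^sub>R e \<in> cball 0 r1" using inK that h r01
          by (metis diff_gt_0_iff_gt less_eq_real_def order_refl)
        ultimately show "x + h *\<^sub>R e \<in> B" "x \<in> B" using K0B by auto
      qed
      define hi where "hi = 1 / h"
      have hi: "hi > 0" using h by (simp add: hi_def)
      define c where "c = \<epsilon> * 2 powr (\<beta> + 2)"
      have c: "c > 0" using \<epsilon> by (simp add: c_def)
      define \<phi> where "\<phi> x = a0 * u x - norm (x - y) powr \<beta>" for x
      define W where "W x = (u (x + h *\<^sub>R e) - u x) * hi - c * (a0 * u x - norm (x - y) powr \<beta>)" for x
      have Wphi: "W x = (u (x + h *\<^sub>R e) - u x) * hi - c * \<phi> x" for x by (simp add: W_def \<phi>_def)
      have approx': "\<bar>(u (x + h *\<^sub>R e) - u x) * hi - Du x e\<bar> < \<delta>" if "x \<in> cball y (1/2)" for x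
        using approx that by (simp add: hi_def)
      define K where "K = {x \<in> cball y (1/2). u x \<le> \<eta>}"
      have ucb: "continuous_on (cball y (1/2)) u"
        by (rule continuous_on_subset[OF ucont]) (use inB in blast)
      have closedK: "closed K" unfolding K_def
        by (rule continuous_on_closed_Collect_le[OF ucb continuous_on_const closed_cball])
      have compK: "compact K"
      proof -
        have "K \<subseteq> cball y (1/2)" by (auto simp: K_def)
        then have "bounded K" using bounded_subset bounded_cball by blast
        then show ?thesis using closedK by (simp add: compact_eq_bounded_closed)
      qed
      have yK: "y \<in> K" using uy by (simp add: K_def)
      have bcont: "continuous_on UNIV (\<lambda>x. norm (x - y) powr \<beta>)"
        by (rule continuous_at_imp_continuous_on) (use b_deriv[OF b2] has_derivative_continuous in blast)
      have ushift: "continuous_on (cball y (1/2)) (\<lambda>x. u (x + h *\<^sub>R e))"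
      proof -
        have sub: "(\<lambda>x. x + h *\<^sub>R e) ` cball y (1/2) \<subseteq> B" using inB by blast
        have "continuous_on (cball y (1/2)) (\<lambda>x. x + h *\<^sub>R e)" by (intro continuous_intros)
        from continuous_on_compose[OF this continuous_on_subset[OF ucont sub]]
        have "continuous_on (cball y (1/2)) (u \<circ> (\<lambda>x. x + h *\<^sub>R e))" .
        then show ?thesis by (simp add: o_def)
      qed
      have Wcont: "continuous_on K W"
      proof -
        have "continuous_on (cball y (1/2)) W"
          unfolding W_def
          by (intro continuous_intros ushift ucb continuous_on_subset[OF bcont]) auto
        then show ?thesis by (rule continuous_on_subset) (auto simp: K_def)
      qed
      obtain z where zK: "z \<in> K" and zmin: "\<forall>p\<in>K. W z \<le> W p"
        using continuous_attains_inf[OF compK _ Wcont] yK by blast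
      have Wy: "W y < 0"
      proof -
        have "(u (y + h *\<^sub>R e) - u y) * hi < Du y e + \<delta>" using approx'[of y] by simp
        moreover have "0 \<le> c * (a0 * u y)" using c a0 unn yB by simp
        ultimately show ?thesis using \<delta> by (simp add: W_def)
      qed
      have Wz: "W z < 0" using zmin yK Wy by force
      have zc: "z \<in> cball y (1/2)" and uzle: "u z \<le> \<eta>" using zK by (auto simp: K_def)
      have zB: "z \<in> B" "z + h *\<^sub>R e \<in> B" using inB[OF zc] by auto
      have pw1: "2 powr (\<beta> + 2) = 2 * 2 powr (\<beta> + 1)" by (simp add: powr_add)
      have pw2: "2 powr (\<beta> + 2) = 4 * 2 powr \<beta>" by (simp add: powr_add)
      have ca: "c * (a0 * \<eta>) \<le> 2 * \<epsilon>"
      proof -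
        have "a0 * \<eta> \<le> 1 / 2 powr (\<beta> + 1)" using etale a0
          by (simp add: \<beta>_def field_simps)
        then have "c * (a0 * \<eta>) \<le> c * (1 / 2 powr (\<beta> + 1))" using c by (intro mult_left_mono) auto
        also have "\<dots> = 2 * \<epsilon>" by (simp add: c_def pw1)
        finally show ?thesis .
      qed
      have chalf: "c * ((1/2) powr \<beta>) = 4 * \<epsilon>"
        by (simp add: c_def pw2 powr_divide)
      have uz0: "u z > 0"
      proof (rule ccontr)
        assume "\<not> u z > 0"
        then have "u z = 0" using unn zB by force
        moreover have "0 \<le> u (z + h *\<^sub>R e)" using unn zB by simp
        ultimately have "W z \<ge> 0" using hi c by (simp add: W_def)
        then show False using Wz by simp
      qed
      have uzeta: "u z < \<eta>"
      proof (rule ccontr)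
        assume "\<not> u z < \<eta>"
        then have "\<kappa> \<le> Du z e" using hk zB by (simp add: B_def dir)
        moreover have "(u (z + h *\<^sub>R e) - u z) * hi > Du z e - \<delta>" using approx'[OF zc] by simp
        moreover have "c * \<phi> z \<le> 2 * \<epsilon>"
        proof -
          have m: "a0 * u z \<le> a0 * \<eta>" by (rule mult_left_mono[OF uzle]) (use a0 in simp)
          have nn: "0 \<le> norm (z - y) powr \<beta>" by simp
          have "\<phi> z \<le> a0 * \<eta>" unfolding \<phi>_def using m nn by linarith
          then have "c * \<phi> z \<le> c * (a0 * \<eta>)" using c by (simp add: mult_left_mono)
          then show ?thesis using ca by simp
        qed
        ultimately have "W z \<ge> 0" using \<delta> unfolding Wphi \<epsilon>_def by simp
        then show False using Wz by simp
      qed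
      have dz: "dist y z < 1/2"
      proof (rule ccontr)
        assume "\<not> dist y z < 1/2"
        then have nz: "norm (z - y) = 1/2" using zc by (simp add: dist_norm norm_minus_commute)
        have "- \<epsilon> \<le> Du z e" using heps zB by (simp add: B_def dir)
        moreover have "(u (z + h *\<^sub>R e) - u z) * hi > Du z e - \<delta>" using approx'[OF zc] by simp
        moreover have "c * \<phi> z \<le> - 2 * \<epsilon>"
        proof -
          have "a0 * u z \<le> a0 * \<eta>" by (rule mult_left_mono[OF uzle]) (use a0 in simp)
          then have "c * (a0 * u z) \<le> c * (a0 * \<eta>)" using c by (simp add: mult_left_mono)
          moreover have pz: "norm (z - y) powr \<beta> = (1/2) powr \<beta>" by (simp only: nz)
          ultimately show ?thesis using ca chalf unfolding \<phi>_def right_diff_distrib pz by linarith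
        qed
        ultimately have "W z \<ge> 0" using \<delta> unfolding Wphi by simp
        then show False using Wz by simp
      qed
      define V where "V = ball y (1/2) \<inter> (B \<inter> u -` {..<\<eta>})"
      have openV: "open V" unfolding V_def
        by (intro open_Int open_ball continuous_open_preimage[OF ucont]) (auto simp: B_def)
      have zV: "z \<in> V" using dz uzeta zB by (simp add: V_def)
      have VK: "V \<subseteq> K" by (auto simp: V_def K_def)
      have Vmin: "\<forall>p\<in>V. W z \<le> W p" using zmin VK by blast
      have VB: "p \<in> cball y (1/2)" if "p \<in> V" for p using that by (auto simp: V_def)
      define DW where "DW p k = (Du (p + h *\<^sub>R e) k - Du p k) * hi - c * (a0 * Du p k - gb y \<beta> p \<bullet> k)" for p k
      have dW: "\<forall>p\<in>V. (W has_derivative DW p) (at p)"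
      proof
        fix p assume p: "p \<in> V"
        have p1: "p + h *\<^sub>R e \<in> B" "p \<in> B" using inB[OF VB[OF p]] by auto
        show "(W has_derivative DW p) (at p)"
          unfolding W_def DW_def
          by (rule has_derivative_diff[OF has_derivative_mult_left[OF has_derivative_diff[OF shift_deriv]]
                has_derivative_mult_right[OF has_derivative_diff[OF has_derivative_mult_right b_deriv[OF b2]]]])
            (use du p1 in auto)
      qed
      define A where "A = D2u z"
      define A' where "A' = D2u (z + h *\<^sub>R e)"
      define Hz where "Hz = Hb y \<beta> z"
      define P where "P = hi *\<^sub>R (A' - A) - c *\<^sub>R (a0 *\<^sub>R A - Hz)"
      have Qv: "0 \<le> v \<bullet> (P *v v)" for v
      proof -
        have "((\<lambda>p. DW p v) has_derivative
           (\<lambda>k. (inner (A' *v k) v - inner (A *v k) v) * hi - c * (a0 * inner (A *v k) v - (Hz *v k) \<bullet> v))) (at z)"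
          unfolding DW_def A_def A'_def Hz_def
          by (rule has_derivative_diff[OF has_derivative_mult_left[OF has_derivative_diff[OF shift_deriv]]
                has_derivative_mult_right[OF has_derivative_diff[OF has_derivative_mult_right
                  has_derivative_inner_left[OF gb_deriv[OF b2]]]]])
            (use dd zB in auto)
        from second_order[OF openV zV Vmin dW this]
        have "0 \<le> (inner (A' *v v) v - inner (A *v v) v) * hi - c * (a0 * inner (A *v v) v - (Hz *v v) \<bullet> v)" .
        also have "\<dots> = v \<bullet> (P *v v)"
          by (simp add: P_def matrix_vector_mult_diff_rdistrib scaleR_matrix_vector_assoc[symmetric]
              inner_diff_right inner_commute algebra_simps)
        finally show ?thesis .
      qed
      have psdP: "psd P" unfolding psd_def using Qv by blast
      have tr_diff: "transpose (X - Y) = transpose X - transpose (Y::real^'n^'n)" for X Y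
        by (simp add: vec_eq_iff transpose_def)
      have symA: "sym_mat A" unfolding A_def by (rule symD[OF zB(1)])
      have symA': "sym_mat A'" unfolding A'_def by (rule symD[OF zB(2)])
      have symH: "sym_mat Hz" unfolding Hz_def by (rule Hb_sym[OF b2])
      have symAA: "sym_mat (A' - A)" using symA symA' by (simp add: sym_mat_def tr_diff)
      have symP: "sym_mat P" using symA symA' symH
        by (simp add: P_def sym_mat_def tr_diff transpose_scalar)
      obtain S where sd: "subdiff F A S" using subgrad_exists[OF cvx symA] by blast
      have bl: "bounded_linear S" using sd by (simp add: subdiff_def linear_conv_bounded_linear)
      have SP: "0 \<le> S P" by (rule S_psd_nonneg[OF ell _ sd symA symP psdP]) (use L1 in simp)
      have SAA: "S (A' - A) \<le> F A' - F A"
      proof -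
        have "S (A' - A) \<le> F (A + (A' - A)) - F A" using sd symAA unfolding subdiff_def by blast
        then show ?thesis by simp
      qed
      have FA: "F A = u z powr (\<gamma> - 1)" using eqF zB hess unfolding A_def by blast
      have FA': "F A' = u (z + h *\<^sub>R e) powr (\<gamma> - 1)" using eqF zB hess unfolding A'_def by blast
      have "lin_nonneg F \<gamma> B u (\<lambda>x. a0 * u x - norm (x - y) powr (2 / (2 - \<gamma>)))"
        using LN sol unfolding B_def by (auto intro: convex_connected)
      then have lin: "0 \<le> S (a0 *\<^sub>R A - Hz) - (\<gamma> - 1) * u z powr (\<gamma> - 2) * \<phi> z"
        unfolding lin_nonneg_def \<beta>_def[symmetric] \<phi>_def
        using zB uz0 hess sd hess_phi[OF hess[rule_format, OF zB(1)] b2, of a0 y] unfolding A_def Hz_def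
        by blast
      have SPe: "S P = hi * S (A' - A) - c * S (a0 *\<^sub>R A - Hz)"
        unfolding P_def by (simp add: linear_simps[OF bl])
      define U0 where "U0 = u z"
      define U1 where "U1 = u (z + h *\<^sub>R e)"
      have U1: "U1 \<ge> 0" using unn zB by (simp add: U1_def)
      have conc: "U1 powr (\<gamma> - 1) \<le> U0 powr (\<gamma> - 1) + (\<gamma> - 1) * U0 powr (\<gamma> - 2) * (U1 - U0)"
        using powr_concave[of "\<gamma> - 1" U0 U1] g1 g2 uz0 U1 by (simp add: U0_def)
      define K' where "K' = (\<gamma> - 1) * U0 powr (\<gamma> - 2)"
      have K': "K' > 0" using g1 uz0 by (simp add: K'_def U0_def)
      have "0 \<le> hi * S (A' - A) - c * S (a0 *\<^sub>R A - Hz)" using SP SPe by simp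
      also have "\<dots> \<le> hi * (K' * (U1 - U0)) - c * (K' * \<phi> z)"
      proof -
        have "hi * S (A' - A) \<le> hi * (K' * (U1 - U0))"
          using SAA FA FA' conc hi by (intro mult_left_mono) (auto simp: K'_def U0_def U1_def)
        moreover have "c * (K' * \<phi> z) \<le> c * S (a0 *\<^sub>R A - Hz)"
          using lin c by (intro mult_left_mono) (auto simp: K'_def U0_def)
        ultimately show ?thesis by linarith
      qed
      also have "\<dots> = K' * W z" unfolding Wphi U0_def U1_def by (simp add: algebra_simps)
      finally have "0 \<le> K' * W z" .
      then show False using K' Wz by (simp add: mult_less_0_iff zero_le_mult_iff)
    qed
  qed
qed

end
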